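(* Let $(X,d)$ be a complete metric space and let $(a_n)_{n\in\mathbb{N}^*}$ be a sequence of positive reals with $M:=\sup_{n\ge1}\frac{a_n}{a_{n-1}}<1$. Let $f:\ell_\infty(X)\to X$ satisfy one of the following: (i) $a_0L_{s,(a_n)}(f)<1$; (ii) $L_{p,(a_n)}(f)<\left(\frac{1-M}{a_0}\right)^{1/p}$ for some $p\in[1,\infty)$. Then $f$ has a generalized contractive fixed point.
   Context: $\mathbb{N}^*=\{0,1,2,\dots\}$; $\ell_\infty(X)$ is the set of all bounded sequences $(x_n)_{n\in\mathbb{N}^*}$ in $X$. $d_{s,(a_n)}(x,y):=\sup\{a_n d(x_n,y_n):n\in\mathbb{N}^*\}$ and $d_{p,(a_n)}(x,y):=\left(\sum_{n=0}^\infty a_n d^p(x_n,y_n)\right)^{1/p}$; $L_{s,(a_n)}(f)$, $L_{p,(a_n)}(f)$ are the Lipschitz constants of $f$ with respect to these metrics on $\ell_\infty(X)$ and $d$ on $X$. $\tilde f((x_n))=(f((x_n)),x_0,x_1,\dots)$; for $x\in\ell_\infty(X)$: $\tilde{x}^0:=x$, $x^k:=f(\tilde{x}^{k-1})$, $\tilde{x}^k:=\tilde f(\tilde{x}^{k-1})$ ($k\ge1$), and $(x^k)$ is the sequence of generalized iterates of $f$ at $x$. A point $x_*\in X$ with $f(x_*,x_*,\dots)=x_*$ is a generalized fixed point; it is a generalized contractive fixed point if for every $x\in\ell_\infty(X)$ the generalized iterates of $f$ at $x$ converge to $x_*$. *)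

theory Defs
  imports "HOL-Analysis.Analysis"
begin

definition linf :: "(nat \<Rightarrow> 'a::metric_space) set" where
  "linf = {x. bounded (range x)}"

definition d_s :: "(nat \<Rightarrow> real) \<Rightarrow> (nat \<Rightarrow> 'a::metric_space) \<Rightarrow> (nat \<Rightarrow> 'a) \<Rightarrow> real" where
  "d_s a x y = (SUP n. a n * dist (x n) (y n))"

definition d_p :: "real \<Rightarrow> (nat \<Rightarrow> real) \<Rightarrow> (nat \<Rightarrow> 'a::metric_space) \<Rightarrow> (nat \<Rightarrow> 'a) \<Rightarrow> real" where
  "d_p p a x y = (\<Sum>n. a n * dist (x n) (y n) powr p) powr (1 / p)"

definition lip_const :: "((nat \<Rightarrow> 'a) \<Rightarrow> (nat \<Rightarrow> 'a) \<Rightarrow> real) \<Rightarrow> ((nat \<Rightarrow> 'a::metric_space) \<Rightarrow> 'a) \<Rightarrow> ereal" where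
  "lip_const D f = (SUP xy \<in> {(x, y). x \<in> linf \<and> y \<in> linf \<and> x \<noteq> y}.
                      ereal (dist (f (fst xy)) (f (snd xy)) / D (fst xy) (snd xy)))"

definition L_s :: "(nat \<Rightarrow> real) \<Rightarrow> ((nat \<Rightarrow> 'a::metric_space) \<Rightarrow> 'a) \<Rightarrow> ereal" where
  "L_s a f = lip_const (d_s a) f"

definition L_p :: "real \<Rightarrow> (nat \<Rightarrow> real) \<Rightarrow> ((nat \<Rightarrow> 'a::metric_space) \<Rightarrow> 'a) \<Rightarrow> ereal" where
  "L_p p a f = lip_const (d_p p a) f"

definition ftilde :: "((nat \<Rightarrow> 'a) \<Rightarrow> 'a) \<Rightarrow> (nat \<Rightarrow> 'a) \<Rightarrow> (nat \<Rightarrow> 'a)" where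
  "ftilde f x = case_nat (f x) x"

text \<open>Generalized iterates: x^k = f(tilde x^(k-1)) for k >= 1, where tilde x^0 = x and
  tilde x^k = tilde f (tilde x^(k-1)). (The value at k = 0 is irrelevant for convergence.)\<close>
definition gen_iterate :: "((nat \<Rightarrow> 'a) \<Rightarrow> 'a) \<Rightarrow> (nat \<Rightarrow> 'a) \<Rightarrow> nat \<Rightarrow> 'a" where
  "gen_iterate f x k = f ((ftilde f ^^ (k - 1)) x)"

definition gen_fixed_point :: "((nat \<Rightarrow> 'a) \<Rightarrow> 'a) \<Rightarrow> 'a \<Rightarrow> bool" where
  "gen_fixed_point f xs \<longleftrightarrow> f (\<lambda>_. xs) = xs"

definition gen_contractive_fixed_point :: "((nat \<Rightarrow> 'a::metric_space) \<Rightarrow> 'a) \<Rightarrow> 'a \<Rightarrow> bool" where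
  "gen_contractive_fixed_point f xs \<longleftrightarrow>
     gen_fixed_point f xs \<and> (\<forall>x \<in> linf. gen_iterate f x \<longlonglongrightarrow> xs)"

end

theory Submission
  imports Defs
begin

lemma linf_bound:
  assumes "x \<in> linf" "y \<in> linf"
  shows "\<exists>B\<ge>0. \<forall>n. dist (x n) (y n) \<le> B"
proof -
  from assms have bx: "bounded (range x)" and by': "bounded (range y)" by (auto simp: linf_def)
  obtain e1 where e1: "\<forall>z\<in>range x. dist (x 0) z \<le> e1" using bx bounded_any_center by blast
  obtain e2 where e2: "\<forall>z\<in>range y. dist (x 0) z \<le> e2" using by' bounded_any_center by blast
  have "dist (x n) (y n) \<le> max 0 (e1 + e2)" for n
  proof -
    have "dist (x n) (y n) \<le> dist (x 0) (x n) + dist (x 0) (y n)"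
      using dist_triangle[of "x n" "y n" "x 0"] by (simp add: dist_commute)
    also have "\<dots> \<le> e1 + e2" using e1 e2 by (intro add_mono) auto
    finally show ?thesis by simp
  qed
  then show ?thesis by (intro exI[of _ "max 0 (e1+e2)"]) auto
qed

lemma linf_const: "(\<lambda>_. c) \<in> linf"
  by (simp add: linf_def)

lemma linf_case: "y \<in> linf \<Longrightarrow> case_nat v y \<in> linf"
proof -
  assume "y \<in> linf"
  then have "bounded (insert v (range y))" by (simp add: linf_def)
  moreover have "range (case_nat v y) \<subseteq> insert v (range y)"
    by (auto split: nat.splits)
  ultimately show ?thesis unfolding linf_def using bounded_subset by blast
qed

lemma linf_iter: "x \<in> linf \<Longrightarrow> (ftilde f ^^ k) x \<in> linf"
  by (induction k) (auto simp: ftilde_def linf_case)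

lemma lip_apply:
  assumes "lip_const D f \<le> ereal r" "0 \<le> r" "x \<in> linf" "y \<in> linf"
    and pos: "\<And>x y. x \<in> linf \<Longrightarrow> y \<in> linf \<Longrightarrow> x \<noteq> y \<Longrightarrow> D x y > 0"
    and nn: "0 \<le> D x y"
  shows "dist (f x) (f y) \<le> r * D x y"
proof (cases "x = y")
  case True then show ?thesis using assms by simp
next
  case False
  then have mem: "(x, y) \<in> {(x, y). x \<in> linf \<and> y \<in> linf \<and> x \<noteq> y}" using assms(3,4) by auto
  have "ereal (dist (f x) (f y) / D x y) \<le> lip_const D f"
    unfolding lip_const_def
    using SUP_upper[OF mem, of "\<lambda>xy. ereal (dist (f (fst xy)) (f (snd xy)) / D (fst xy) (snd xy))"] by simp
  then have "ereal (dist (f x) (f y) / D x y) \<le> ereal r" using assms(1) by (rule order_trans)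
  then have "dist (f x) (f y) / D x y \<le> r" by simp
  moreover have "D x y > 0" using pos False assms by auto
  ultimately show ?thesis by (simp add: divide_le_eq mult.commute)
qed

lemma geom_to0:
  fixes W :: "nat \<Rightarrow> real"
  assumes "\<And>k. 0 \<le> W k" "\<And>k. W (Suc k) \<le> q * W k" "0 \<le> q" "q < 1"
  shows "W \<longlonglongrightarrow> 0"
proof -
  have le: "W k \<le> q ^ k * W 0" for k
  proof (induction k)
    case 0 then show ?case by simp
  next
    case (Suc k)
    have "W (Suc k) \<le> q * W k" by fact
    also have "\<dots> \<le> q * (q ^ k * W 0)" by (rule mult_left_mono[OF Suc.IH assms(3)])
    finally show ?case by simp
  qed
  have "norm q < 1" using assms(3,4) by simp
  then have "(\<lambda>k. q ^ k) \<longlonglongrightarrow> 0" by (rule LIMSEQ_power_zero)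
  then have g: "(\<lambda>k. q ^ k * W 0) \<longlonglongrightarrow> 0" by (rule tendsto_mult_left_zero)
  have "\<forall>\<^sub>F k in sequentially. norm (W k) \<le> q ^ k * W 0"
    using le assms(1) by (simp add: always_eventually)
  then show ?thesis by (rule Lim_null_comparison[OF _ g])
qed

lemma conv_from_bound:
  assumes "\<And>k. dist (u (Suc k)) l \<le> V k" "V \<longlonglongrightarrow> 0"
  shows "u \<longlonglongrightarrow> l"
proof -
  have "(\<lambda>k. dist (u (Suc k)) l) \<longlonglongrightarrow> 0"
  proof (rule Lim_null_comparison[OF _ assms(2)])
    show "\<forall>\<^sub>F k in sequentially. norm (dist (u (Suc k)) l) \<le> V k"
      by (rule always_eventually) (use assms(1) in simp)
  qed
  then have "(\<lambda>k. u (Suc k)) \<longlonglongrightarrow> l" by (rule tendsto_dist_iff[THEN iffD2])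
  then show ?thesis by (simp add: filterlim_sequentially_Suc)
qed

lemma iter_Suc: "gen_iterate f x (Suc k) = f ((ftilde f ^^ k) x)"
  by (simp add: gen_iterate_def)

theorem mainTheorem13:
  fixes f :: "(nat \<Rightarrow> 'a::complete_space) \<Rightarrow> 'a"
    and a :: "nat \<Rightarrow> real"
    and M :: real
  assumes a_pos: "\<And>n. a n > 0"
    and M_bdd: "bdd_above (range (\<lambda>n. a (Suc n) / a n))"
    and M_def: "M = (SUP n. a (Suc n) / a n)"
    and M_lt1: "M < 1"
    and cond: "ereal (a 0) * L_s a f < 1 \<or>
               (\<exists>p::real. p \<ge> 1 \<and> L_p p a f < ereal (((1 - M) / a 0) powr (1 / p)))"
  shows "\<exists>xs. gen_contractive_fixed_point f xs"
proof -
  have ratio: "a (Suc n) / a n \<le> M" for n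
    unfolding M_def by (rule cSUP_upper[OF _ M_bdd]) simp
  have aSuc: "a (Suc n) \<le> M * a n" for n
    using ratio[of n] a_pos[of n] by (simp add: divide_le_eq)
  have M0: "0 \<le> M"
  proof -
    have "0 < a (Suc 0) / a 0" using a_pos[of 0] a_pos[of "Suc 0"] by simp
    then show ?thesis using ratio[of 0] by linarith
  qed
  have ageo: "a n \<le> a 0 * M ^ n" for n
  proof (induction n)
    case 0 then show ?case by simp
  next
    case (Suc n)
    have "a (Suc n) \<le> M * a n" by (rule aSuc)
    also have "\<dots> \<le> M * (a 0 * M ^ n)" by (rule mult_left_mono[OF Suc.IH M0])
    finally show ?case by (simp add: algebra_simps)
  qed
  have ale0: "a n \<le> a 0" for n
  proof -
    have "M ^ n \<le> 1" using M0 M_lt1 by (simp add: power_le_one)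
    then have "a 0 * M ^ n \<le> a 0" using a_pos[of 0] by (simp add: mult_left_le)
    then show ?thesis using ageo[of n] by linarith
  qed
  have sumgeo: "summable (\<lambda>n. a 0 * M ^ n)"
    using M0 M_lt1 by (intro summable_mult summable_geometric) auto
  have suma: "summable a"
    by (rule summable_comparison_test'[OF sumgeo, of 0]) (use a_pos ageo in \<open>auto simp: less_imp_le\<close>)
  have suma_le: "suminf a \<le> a 0 / (1 - M)"
  proof -
    have "suminf a \<le> (\<Sum>n. a 0 * M ^ n)" by (rule suminf_le[OF ageo suma sumgeo])
    also have "\<dots> = a 0 * (1 / (1 - M))"
      using M0 M_lt1 by (simp add: suminf_mult suminf_geometric)
    finally show ?thesis by simp
  qed
  have suma_pos: "0 < suminf a" using suminf_pos2[OF suma, of 0] a_pos by (simp add: less_imp_le)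
  define T where "T = ftilde f"
  have Tsimp: "(T ^^ Suc k) x = case_nat (f ((T ^^ k) x)) ((T ^^ k) x)" for k x
    by (simp add: T_def ftilde_def)
  from cond show ?thesis
  proof
    assume c1: "ereal (a 0) * L_s a f < 1"
    obtain r where r0: "0 \<le> r" and rL: "L_s a f \<le> ereal r" and ar: "a 0 * r < 1"
    proof (cases "L_s a f" rule: ereal_cases)
      case (real l)
      then have "a 0 * l < 1" using c1 by simp
      then show ?thesis using real a_pos[of 0]
        by (intro that[of "max 0 l"]) (auto simp: max_def)
    next
      case PInf
      then show ?thesis using c1 a_pos[of 0] by simp
    next
      case MInf
      then show ?thesis by (intro that[of 0]) (auto simp: a_pos)
    qed
    have dsbdd: "bdd_above (range (\<lambda>n. a n * dist (x n) (y n)))" if xy: "x \<in> linf" "y \<in> linf" for x y :: "nat \<Rightarrow> 'a"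
    proof -
      obtain B where B: "B \<ge> 0" "\<And>n. dist (x n) (y n) \<le> B" using linf_bound[OF xy] by blast
      have "a n * dist (x n) (y n) \<le> a 0 * B" for n
        by (rule mult_mono) (use ale0 B a_pos in \<open>auto simp: less_imp_le\<close>)
      then show ?thesis by (intro bdd_aboveI2) 
    qed
    have dsge: "a n * dist (x n) (y n) \<le> d_s a x y" if "x \<in> linf" "y \<in> linf" for x y :: "nat \<Rightarrow> 'a" and n
      unfolding d_s_def by (rule cSUP_upper[OF _ dsbdd[OF that]]) simp
    have dsnn: "0 \<le> d_s a x y" if "x \<in> linf" "y \<in> linf" for x y :: "nat \<Rightarrow> 'a"
    proof -
      have "0 \<le> a 0 * dist (x 0) (y 0)" using a_pos[of 0] by simp
      then show ?thesis using dsge[OF that, of 0] by linarith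
    qed
    have dspos: "0 < d_s a x y" if "x \<in> linf" "y \<in> linf" "x \<noteq> y" for x y :: "nat \<Rightarrow> 'a"
    proof -
      note xy = that
      obtain n where "x n \<noteq> y n" using xy(3) by blast
      then have "0 < a n * dist (x n) (y n)" using a_pos[of n] by simp
      then show ?thesis using dsge[OF xy(1,2), of n] by linarith
    qed
    have lip: "dist (f x) (f y) \<le> r * d_s a x y" if "x \<in> linf" "y \<in> linf" for x y :: "nat \<Rightarrow> 'a"
      by (rule lip_apply[where D="d_s a", OF rL[unfolded L_s_def] r0 that dspos dsnn[OF that]])
    have dsconst: "d_s a (\<lambda>_. z) (\<lambda>_. w) \<le> a 0 * dist z w" for z w :: 'a
      unfolding d_s_def by (rule cSUP_least) (auto intro: mult_right_mono[OF ale0])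
    have "\<exists>!xs. f (\<lambda>_. xs) = xs"
    proof (rule banach_fix_type[where c="r * a 0"])
      show "0 \<le> r * a 0" using r0 a_pos[of 0] by simp
      show "r * a 0 < 1" using ar by (simp add: mult.commute)
      show "\<forall>z w. dist (f (\<lambda>_. z)) (f (\<lambda>_. w)) \<le> r * a 0 * dist z w"
      proof (intro allI)
        fix z w :: 'a
        have "dist (f (\<lambda>_. z)) (f (\<lambda>_. w)) \<le> r * d_s a (\<lambda>_. z) (\<lambda>_. w)"
          by (rule lip) (auto simp: linf_const)
        also have "\<dots> \<le> r * (a 0 * dist z w)" by (rule mult_left_mono[OF dsconst r0])
        finally show "dist (f (\<lambda>_. z)) (f (\<lambda>_. w)) \<le> r * a 0 * dist z w" by simp
      qed
    qed
    then obtain xs where fxs: "f (\<lambda>_. xs) = xs" by blast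
    define c where "c = (\<lambda>_::nat. xs)"
    have cl: "c \<in> linf" by (simp add: c_def linf_const)
    define q where "q = max (a 0 * r) M"
    have q0: "0 \<le> q" "q < 1" using M0 M_lt1 ar by (auto simp: q_def)
    have step: "d_s a (case_nat (f y) y) c \<le> q * d_s a y c" if y: "y \<in> linf" for y :: "nat \<Rightarrow> 'a"
      unfolding d_s_def[of a "case_nat (f y) y"]
    proof (rule cSUP_least)
      fix n
      show "a n * dist (case_nat (f y) y n) (c n) \<le> q * d_s a y c"
      proof (cases n)
        case 0
        have "dist (f y) xs \<le> r * d_s a y c"
          using lip[OF y cl] fxs by (simp add: c_def)
        then have "a 0 * dist (f y) xs \<le> a 0 * (r * d_s a y c)"
          using a_pos[of 0] by simp
        also have "\<dots> = (a 0 * r) * d_s a y c" by simp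
        also have "\<dots> \<le> q * d_s a y c"
          by (rule mult_right_mono[OF _ dsnn[OF y cl]]) (simp add: q_def)
        finally show ?thesis using 0 by (simp add: c_def)
      next
        case (Suc m)
        have "a (Suc m) * dist (y m) xs \<le> (M * a m) * dist (y m) xs"
          by (rule mult_right_mono[OF aSuc]) simp
        also have "\<dots> = M * (a m * dist (y m) (c m))" by (simp add: c_def)
        also have "\<dots> \<le> M * d_s a y c" by (rule mult_left_mono[OF dsge[OF y cl] M0])
        also have "\<dots> \<le> q * d_s a y c"
          by (rule mult_right_mono[OF _ dsnn[OF y cl]]) (simp add: q_def)
        finally show ?thesis using Suc by (simp add: c_def)
      qed
    qed simp
    have conv: "gen_iterate f x \<longlonglongrightarrow> xs" if x: "x \<in> linf" for x
    proof -
      define W where "W k = d_s a ((T ^^ k) x) c" for k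
      have Wnn: "0 \<le> W k" for k unfolding W_def T_def by (rule dsnn[OF linf_iter[OF x] cl])
      have Wstep: "W (Suc k) \<le> q * W k" for k
        unfolding W_def Tsimp by (rule step) (simp add: T_def linf_iter[OF x])
      have "W \<longlonglongrightarrow> 0" by (rule geom_to0[where W=W and q=q, OF Wnn Wstep q0])
      then have V: "(\<lambda>k. r * W k) \<longlonglongrightarrow> 0" by (rule tendsto_mult_right_zero)
      show ?thesis
      proof (rule conv_from_bound[OF _ V])
        fix k
        have "dist (f ((T ^^ k) x)) (f c) \<le> r * W k"
          unfolding W_def by (rule lip[OF _ cl]) (simp add: T_def linf_iter[OF x])
        then show "dist (gen_iterate f x (Suc k)) xs \<le> r * W k"
          using fxs by (simp add: iter_Suc T_def c_def)
      qed
    qed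
    show ?thesis using fxs conv
      by (auto simp: gen_contractive_fixed_point_def gen_fixed_point_def)
  next
    assume "\<exists>p::real. p \<ge> 1 \<and> L_p p a f < ereal (((1 - M) / a 0) powr (1 / p))"
    then obtain p :: real where p1: "p \<ge> 1" and Lp: "L_p p a f < ereal (((1 - M) / a 0) powr (1 / p))"
      by blast
    define C where "C = ((1 - M) / a 0) powr (1 / p)"
    have base_pos: "0 < (1 - M) / a 0" using M_lt1 a_pos[of 0] by simp
    have C0: "0 < C" unfolding C_def using base_pos M_lt1 a_pos[of 0] by simp
    obtain r where r0: "0 \<le> r" and rL: "L_p p a f \<le> ereal r" and rC: "r < C"
    proof (cases "L_p p a f" rule: ereal_cases)
      case (real l)
      then have "l < C" using Lp by (simp add: C_def)
      then show ?thesis using real C0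
        by (intro that[of "max 0 l"]) (auto simp: max_def)
    next
      case PInf
      then show ?thesis using Lp by simp
    next
      case MInf
      then show ?thesis using C0 by (intro that[of 0]) auto
    qed
    have p0: "0 < p" using p1 by simp
    have rp: "r powr p < (1 - M) / a 0"
    proof (cases "r = 0")
      case True then show ?thesis using base_pos by simp
    next
      case False
      then have "r powr p < C powr p" using r0 rC p0 by (intro powr_less_mono2) auto
      also have "C powr p = (1 - M) / a 0"
        unfolding C_def powr_powr using p0 base_pos M_lt1 a_pos[of 0] by simp
      finally show ?thesis .
    qed
    have ar: "a 0 * r powr p < 1 - M"
      using rp a_pos[of 0] by (simp add: pos_less_divide_eq mult.commute)
    have summ: "summable (\<lambda>n. a n * dist (x n) (y n) powr p)" if xy: "x \<in> linf" "y \<in> linf" for x y :: "nat \<Rightarrow> 'a"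
    proof -
      obtain B where B: "B \<ge> 0" "\<And>n. dist (x n) (y n) \<le> B" using linf_bound[OF xy] by blast
      have s2: "summable (\<lambda>n. a n * B powr p)" by (rule summable_mult2[OF suma])
      show ?thesis
      proof (rule summable_comparison_test'[OF s2])
        fix n :: nat
        have "dist (x n) (y n) powr p \<le> B powr p" using B p0 by (intro powr_mono2) auto
        then have "a n * dist (x n) (y n) powr p \<le> a n * B powr p"
          using a_pos[of n] by simp
        then show "norm (a n * dist (x n) (y n) powr p) \<le> a n * B powr p"
          using a_pos[of n] by simp
      qed
    qed
    have Snn: "0 \<le> (\<Sum>n. a n * dist (x n) (y n) powr p)" if xy: "x \<in> linf" "y \<in> linf" for x y :: "nat \<Rightarrow> 'a"
      by (rule suminf_nonneg[OF summ[OF xy]]) (use a_pos in \<open>simp add: less_imp_le\<close>)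
    have dpnn: "0 \<le> d_p p a x y" for x y :: "nat \<Rightarrow> 'a"
      by (simp add: d_p_def)
    have dppos: "0 < d_p p a x y" if xy: "x \<in> linf" "y \<in> linf" "x \<noteq> y" for x y :: "nat \<Rightarrow> 'a"
    proof -
      obtain n where "x n \<noteq> y n" using xy(3) by blast
      then have "0 < a n * dist (x n) (y n) powr p" using a_pos[of n] by simp
      then have "0 < (\<Sum>n. a n * dist (x n) (y n) powr p)"
        by (intro suminf_pos2[OF summ[OF xy(1,2)]]) (use a_pos in \<open>simp_all add: less_imp_le\<close>)
      then show ?thesis by (simp add: d_p_def)
    qed
    have lip: "dist (f x) (f y) \<le> r * d_p p a x y" if xy: "x \<in> linf" "y \<in> linf" for x y :: "nat \<Rightarrow> 'a"
      by (rule lip_apply[where D="d_p p a", OF rL[unfolded L_p_def] r0 xy dppos dpnn])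
    have dpconst: "d_p p a (\<lambda>_. z) (\<lambda>_. w) = suminf a powr (1 / p) * dist z w" for z w :: 'a
    proof -
      have "(\<Sum>n. a n * dist z w powr p) = suminf a * dist z w powr p"
        by (rule suminf_mult2[OF suma, symmetric])
      then have "d_p p a (\<lambda>_. z) (\<lambda>_. w) = (suminf a * dist z w powr p) powr (1 / p)"
        by (simp add: d_p_def)
      also have "\<dots> = suminf a powr (1 / p) * (dist z w powr p) powr (1 / p)"
        using suma_pos by (simp add: powr_mult)
      also have "(dist z w powr p) powr (1 / p) = dist z w"
        unfolding powr_powr using p0 by simp
      finally show ?thesis .
    qed
    define \<kappa> where "\<kappa> = r * suminf a powr (1 / p)"
    have kappa: "0 \<le> \<kappa>" "\<kappa> < 1"
    proof -
      show "0 \<le> \<kappa>" unfolding \<kappa>_def using r0 by simp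
      have A0: "0 < (a 0 / (1 - M)) powr (1 / p)" using a_pos[of 0] M_lt1 by simp
      have "suminf a powr (1 / p) \<le> (a 0 / (1 - M)) powr (1 / p)"
        using suma_le suma_pos p0 by (intro powr_mono2) auto
      then have "\<kappa> \<le> r * (a 0 / (1 - M)) powr (1 / p)"
        unfolding \<kappa>_def using r0 by (rule mult_left_mono)
      also have "\<dots> < C * (a 0 / (1 - M)) powr (1 / p)"
        using rC A0 by simp
      also have "\<dots> = ((1 - M) / a 0 * (a 0 / (1 - M))) powr (1 / p)"
        unfolding C_def using a_pos[of 0] M_lt1 by (intro powr_mult[symmetric])
      also have "(1 - M) / a 0 * (a 0 / (1 - M)) = 1" using a_pos[of 0] M_lt1 by simp
      also have "1 powr (1 / p) = (1::real)" by simp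
      finally show "\<kappa> < 1" .
    qed
    have "\<exists>!xs. f (\<lambda>_. xs) = xs"
    proof (rule banach_fix_type[OF kappa])
      show "\<forall>z w. dist (f (\<lambda>_. z)) (f (\<lambda>_. w)) \<le> \<kappa> * dist z w"
      proof (intro allI)
        fix z w :: 'a
        have "dist (f (\<lambda>_. z)) (f (\<lambda>_. w)) \<le> r * d_p p a (\<lambda>_. z) (\<lambda>_. w)"
          by (rule lip) (auto simp: linf_const)
        then show "dist (f (\<lambda>_. z)) (f (\<lambda>_. w)) \<le> \<kappa> * dist z w"
          by (simp add: dpconst \<kappa>_def mult.assoc)
      qed
    qed
    then obtain xs where fxs: "f (\<lambda>_. xs) = xs" by blast
    define c where "c = (\<lambda>_::nat. xs)"
    have cl: "c \<in> linf" by (simp add: c_def linf_const)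
    define P where "P y = (\<Sum>n. a n * dist (y n) (c n) powr p)" for y :: "nat \<Rightarrow> 'a"
    define q where "q = a 0 * r powr p + M"
    have q0: "0 \<le> q" "q < 1" using M0 ar a_pos[of 0] by (auto simp: q_def)
    have Pnn: "0 \<le> P y" if "y \<in> linf" for y unfolding P_def by (rule Snn[OF that cl])
    have dpP: "d_p p a y c = P y powr (1 / p)" for y by (simp add: d_p_def P_def)
    have step: "P (case_nat (f y) y) \<le> q * P y" if y: "y \<in> linf" for y :: "nat \<Rightarrow> 'a"
    proof -
      define g where "g n = a n * dist (case_nat (f y) y n) (c n) powr p" for n
      have sg: "summable g" unfolding g_def by (rule summ[OF linf_case[OF y] cl])
      have sy: "summable (\<lambda>n. a n * dist (y n) (c n) powr p)" by (rule summ[OF y cl])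
      have "P (case_nat (f y) y) = suminf g"
        unfolding P_def by (rule arg_cong[where f=suminf]) (simp add: g_def fun_eq_iff)
      also have "\<dots> = g 0 + (\<Sum>n. g (Suc n))"
        using suminf_split_head[OF sg] by simp
      also have "g 0 = a 0 * dist (f y) xs powr p" by (simp add: g_def c_def)
      also have "(\<lambda>n. g (Suc n)) = (\<lambda>n. a (Suc n) * dist (y n) (c n) powr p)"
        by (simp add: g_def c_def)
      finally have eq: "P (case_nat (f y) y) = a 0 * dist (f y) xs powr p + (\<Sum>n. a (Suc n) * dist (y n) (c n) powr p)" .
      have d1: "dist (f y) xs \<le> r * P y powr (1 / p)"
        using lip[OF y cl, unfolded dpP] fxs by (simp add: c_def)
      have "dist (f y) xs powr p \<le> (r * P y powr (1 / p)) powr p"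
        using d1 p0 by (intro powr_mono2) auto
      also have "\<dots> = r powr p * P y"
        using r0 Pnn[OF y] p0 by (simp add: powr_mult powr_powr)
      finally have b1: "a 0 * dist (f y) xs powr p \<le> a 0 * (r powr p * P y)"
        using a_pos[of 0] by simp
      have ssuc: "summable (\<lambda>n. a (Suc n) * dist (y n) (c n) powr p)"
        using sg by (simp add: summable_Suc_iff[symmetric, of g] g_def c_def)
      have "(\<Sum>n. a (Suc n) * dist (y n) (c n) powr p) \<le> (\<Sum>n. M * (a n * dist (y n) (c n) powr p))"
      proof (rule suminf_le[OF _ ssuc summable_mult[OF sy]])
        fix n
        show "a (Suc n) * dist (y n) (c n) powr p \<le> M * (a n * dist (y n) (c n) powr p)"
          using mult_right_mono[OF aSuc[of n], of "dist (y n) (c n) powr p"] by simp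
      qed
      also have "\<dots> = M * P y" unfolding P_def by (rule suminf_mult[OF sy])
      finally have b2: "(\<Sum>n. a (Suc n) * dist (y n) (c n) powr p) \<le> M * P y" .
      show ?thesis using eq b1 b2 by (simp add: q_def algebra_simps)
    qed
    have conv: "gen_iterate f x \<longlonglongrightarrow> xs" if x: "x \<in> linf" for x
    proof -
      define W where "W k = P ((T ^^ k) x)" for k
      have Wnn: "0 \<le> W k" for k unfolding W_def T_def by (rule Pnn[OF linf_iter[OF x]])
      have Wstep: "W (Suc k) \<le> q * W k" for k
        unfolding W_def Tsimp by (rule step) (simp add: T_def linf_iter[OF x])
      have W0: "W \<longlonglongrightarrow> 0" by (rule geom_to0[where W=W and q=q, OF Wnn Wstep q0])
      have "(\<lambda>k. W k powr (1 / p)) \<longlonglongrightarrow> 0"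
        by (rule tendsto_zero_powrI[OF W0 tendsto_const]) (use Wnn p0 in \<open>auto simp: always_eventually\<close>)
      then have V: "(\<lambda>k. r * W k powr (1 / p)) \<longlonglongrightarrow> 0" by (rule tendsto_mult_right_zero)
      show ?thesis
      proof (rule conv_from_bound[OF _ V])
        fix k
        have "dist (f ((T ^^ k) x)) (f c) \<le> r * d_p p a ((T ^^ k) x) c"
          by (rule lip[OF _ cl]) (simp add: T_def linf_iter[OF x])
        then show "dist (gen_iterate f x (Suc k)) xs \<le> r * W k powr (1 / p)"
          using fxs unfolding dpP by (simp add: iter_Suc T_def c_def W_def)
      qed
    qed
    show ?thesis using fxs conv
      by (auto simp: gen_contractive_fixed_point_def gen_fixed_point_def)
  qed
qed

end
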